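(* Let $B=\{1,\dots,n\}$ be a set of bidders with nonnegative bids, and for $S\subseteq B$ let $R(S)$ be the revenue of a second-price auction (no reserve) among the bidders in $S$, i.e. the second-highest bid in $S$ (and $0$ if $|S|\le 1$). For $S\subseteq B$, let $\mathbf{b}_S\in\mathbb{R}^n$ be the vector whose first $|S|$ coordinates are the bids of the bidders in $S$ sorted in decreasing order and whose remaining coordinates are $0$. Suppose a revenue attribution $\mathbf{R}_S=(R_1,\dots,R_n)$ assigns to the bidders (in this sorted order) revenue shares satisfying, for every bid vector and every $S$: (1) Symmetry: bidders in $S$ with equal bids receive equal attribution; (2) Linearity: $\mathbf{R}_S = \mathbf{A}\,\mathbf{b}_S$ for a fixed $n\times n$ matrix $\mathbf{A}$ (independent of the bids and of $S$); (3) Conservation of revenue: $\sum_{i\in S} R_i = R(S)$. Then $\mathbf{A}$ is uniquely determined: its first column is $0$; its second column is $(\tfrac12,\tfrac12,0,\dots,0)^T$; and for $3\le j\le n$ its $j$-th column has entries $-\frac{1}{j(j-1)}$ in rows $1,\dots,j-1$, entry $\frac{1}{j}$ in row $j$, and $0$ in rows $j+1,\dots,n$. Equivalently, $\mathbf{A}\mathbf{e}_1=0$ and $\mathbf{A}\mathbf{e}_k=\frac1k\mathbf{e}_k$ for $k=2,\dots,n$, where $\mathbf{e}_k$ has ones in its first $k$ positions and zeros elsewhere.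
   Context: Bids are indexed by order statistics $b_{(1)}\ge b_{(2)}\ge\cdots$; the attribution vector $\mathbf{R}_S$ is indexed in the same sorted order, with entries outside the first $|S|$ positions corresponding to absent bidders. *)

theory Defs
  imports Complex_Main
begin

text \<open>Bidders are 1..n; a bid vector is b :: nat => real (only values on {1..n} matter).
  Vectors in R^n are nat => real indexed by 1..n, matrices nat => nat => real indexed by 1..n.\<close>

definition sorted_bids :: "(nat \<Rightarrow> real) \<Rightarrow> nat set \<Rightarrow> real list" where
  "sorted_bids b S = rev (sort (map b (sorted_list_of_set S)))"

definition bvec :: "(nat \<Rightarrow> real) \<Rightarrow> nat set \<Rightarrow> nat \<Rightarrow> real" where
  "bvec b S i = (if 1 \<le> i \<and> i \<le> card S then sorted_bids b S ! (i - 1) else 0)"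

definition second_price :: "(nat \<Rightarrow> real) \<Rightarrow> nat set \<Rightarrow> real" where
  "second_price b S = (if card S \<le> 1 then 0 else sorted_bids b S ! 1)"

definition mat_vec :: "nat \<Rightarrow> (nat \<Rightarrow> nat \<Rightarrow> real) \<Rightarrow> (nat \<Rightarrow> real) \<Rightarrow> nat \<Rightarrow> real" where
  "mat_vec n A x i = (\<Sum>j=1..n. A i j * x j)"

end

theory Submission imports Defs "HOL-Library.Multiset" begin

definition bk :: "nat \<Rightarrow> nat \<Rightarrow> real" where "bk k x = (if x \<le> k then 1 else 0)"

lemma sb: assumes "k \<le> m" shows "sorted_bids (bk k) {1..m} = replicate k 1 @ replicate (m-k) 0"
proof -
  have u: "[1..<m+1] = [1..<k+1] @ [k+1..<m+1]" using assms
    using upt_add_eq_append[of 1 "k+1" "m-k"] assms by simp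
  have m1: "map (bk k) [1..<k+1] = replicate k 1"
    by (rule nth_equalityI) (auto simp: bk_def nth_upt simp del: upt_Suc)
  have m2: "map (bk k) [k+1..<m+1] = replicate (m-k) 0"
    by (rule nth_equalityI) (auto simp: bk_def nth_upt simp del: upt_Suc)
  have "map (bk k) (sorted_list_of_set {1..m}) = replicate k 1 @ replicate (m-k) 0"
  proof -
    have "sorted_list_of_set {1..m} = [1..<m+1]" 
      by (metis sorted_list_of_set_range Suc_eq_plus1 atLeastLessThanSuc_atLeastAtMost)
    thus ?thesis using u m1 m2 by simp
  qed
  moreover have "sort (replicate k (1::real) @ replicate (m-k) 0) = replicate (m-k) 0 @ replicate k 1"
    by (rule properties_for_sort) (auto simp: sorted_append union_commute)
  ultimately show ?thesis unfolding sorted_bids_def by simp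
qed

lemma bv: assumes "k \<le> m" shows "bvec (bk k) {1..m} = (\<lambda>i. if 1 \<le> i \<and> i \<le> k then 1 else 0)"
  using assms unfolding bvec_def sb[OF assms] by (auto simp: nth_append fun_eq_iff)

lemma sp: assumes "k \<le> m" shows "second_price (bk k) {1..m} = (if 2 \<le> k then 1 else 0)"
  using assms unfolding second_price_def sb[OF assms] by (auto simp: nth_append)

lemma mv: assumes "k \<le> n" shows "mat_vec n A (\<lambda>i. if 1 \<le> i \<and> i \<le> k then 1 else 0) i = (\<Sum>j=1..k. A i j)"
proof -
  have "(\<Sum>j=1..n. A i j * (if 1 \<le> j \<and> j \<le> k then 1 else 0)) = (\<Sum>j=1..n. if j \<in> {1..k} then A i j else 0)"
    by (rule sum.cong) auto
  also have "... = (\<Sum>j\<in>{1..k}. A i j)"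
    using assms by (simp add: sum.If_cases Int_absorb1 del: atLeastAtMost_iff)
  finally show ?thesis by (simp add: mat_vec_def)
qed

lemma t1: "bvec (bk k) {1..k} = (\<lambda>i. if 1 \<le> i \<and> i \<le> k then 1 else 0)" by (rule bv) simp
lemma t2: "1 \<le> i' \<Longrightarrow> i' \<le> k \<Longrightarrow> bvec (bk k) {1..k} i' = bvec (bk k) {1..k} 1" unfolding t1 by simp

lemma main:
  fixes n :: nat
    and A :: "nat \<Rightarrow> nat \<Rightarrow> real"
    and R :: "(nat \<Rightarrow> real) \<Rightarrow> nat set \<Rightarrow> nat \<Rightarrow> real"
  assumes symmetry: "\<And>b S i j. (\<forall>k\<in>{1..n}. b k \<ge> 0) \<Longrightarrow> S \<subseteq> {1..n} \<Longrightarrow>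
              i \<in> {1..card S} \<Longrightarrow> j \<in> {1..card S} \<Longrightarrow> bvec b S i = bvec b S j \<Longrightarrow>
              R b S i = R b S j"
    and linearity: "\<And>b S i. (\<forall>k\<in>{1..n}. b k \<ge> 0) \<Longrightarrow> S \<subseteq> {1..n} \<Longrightarrow>
              i \<in> {1..n} \<Longrightarrow> R b S i = mat_vec n A (bvec b S) i"
    and conservation: "\<And>b S. (\<forall>k\<in>{1..n}. b k \<ge> 0) \<Longrightarrow> S \<subseteq> {1..n} \<Longrightarrow>
              (\<Sum>i=1..card S. R b S i) = second_price b S"
    and k: "1 \<le> k" "k \<le> n" and i: "1 \<le> i" "i \<le> n"
  shows "(\<Sum>j=1..k. A i j) = (if i \<le> k then (if 2 \<le> k then 1 / real k else 0) else 0)"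
proof -
  define G where "G i = (\<Sum>j=1..k. A i j)" for i
  have nn: "\<forall>x\<in>{1..n}. bk k x \<ge> 0" by (simp add: bk_def)
  have RG: "R (bk k) {1..m} i' = G i'" if "k \<le> m" "m \<le> n" "1 \<le> i'" "i' \<le> n" for m i'
    using linearity[OF nn, of "{1..m}" i'] that bv[OF that(1)] mv[OF k(2)] by (simp add: G_def)
  have C: "(\<Sum>i'=1..m. G i') = (if 2 \<le> k then 1 else 0)" if "k \<le> m" "m \<le> n" for m
  proof -
    have "(\<Sum>i'=1..m. G i') = (\<Sum>i'=1..m. R (bk k) {1..m} i')"
      by (rule sum.cong) (use that RG in auto)
    also have "... = second_price (bk k) {1..m}"
      using conservation[OF nn, of "{1..m}"] that by simp
    finally show ?thesis using sp[OF that(1)] by simp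
  qed
  show ?thesis
  proof (cases "i \<le> k")
    case True
    have eq: "G i' = G 1" if "1 \<le> i'" "i' \<le> k" for i'
    proof -
      have "R (bk k) {1..k} i' = R (bk k) {1..k} 1"
      proof (rule symmetry[OF nn])
        show "bvec (bk k) {1..k} i' = bvec (bk k) {1..k} 1" by (rule t2) (fact that)+
        show "{1..k} \<subseteq> {1..n}" using k by simp
        show "i' \<in> {1..card {1..k}}" using that by simp
        show "1 \<in> {1..card {1..k}}" using k by simp
      qed
      moreover have "R (bk k) {1..k} i' = G i'" by (rule RG) (use that k in simp_all)
      moreover have "R (bk k) {1..k} 1 = G 1" by (rule RG) (use that k in simp_all)
      ultimately show ?thesis by simp
    qed
    have "(\<Sum>i'=1..k. G i') = real k * G 1"
    proof -
      have "(\<Sum>i'=1..k. G i') = (\<Sum>i'=1..k. G 1)" by (rule sum.cong[OF refl], rule eq) auto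
      thus ?thesis by simp
    qed
    hence "real k * G 1 = (if 2 \<le> k then 1 else 0)" using C[of k] k by simp
    hence "G 1 = (if 2 \<le> k then 1 / real k else 0)" using k by (auto simp: field_simps)
    moreover have "G i = G 1" using eq[of i] True i by blast
    ultimately show ?thesis using True by (simp add: G_def)
  next
    case False
    have "(\<Sum>i'=1..i. G i') = (\<Sum>i'=1..i-1. G i') + G i"
    proof -
      have "{1..i} = insert i {1..i-1}" using i by auto
      moreover have "i \<notin> {1..i-1}" by auto
      ultimately show ?thesis by (metis sum.insert[OF finite_atLeastAtMost] add.commute)
    qed
    moreover have "(\<Sum>i'=1..i. G i') = (\<Sum>i'=1..i-1. G i')"
      using C[of i] C[of "i-1"] False i by simp
    ultimately show ?thesis using False by (simp add: G_def)
  qed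
qed
theorem proposition3:
  fixes n :: nat
    and A :: "nat \<Rightarrow> nat \<Rightarrow> real"
    and R :: "(nat \<Rightarrow> real) \<Rightarrow> nat set \<Rightarrow> nat \<Rightarrow> real"
  assumes symmetry: "\<And>b S i j. (\<forall>k\<in>{1..n}. b k \<ge> 0) \<Longrightarrow> S \<subseteq> {1..n} \<Longrightarrow>
              i \<in> {1..card S} \<Longrightarrow> j \<in> {1..card S} \<Longrightarrow> bvec b S i = bvec b S j \<Longrightarrow>
              R b S i = R b S j"
    and linearity: "\<And>b S i. (\<forall>k\<in>{1..n}. b k \<ge> 0) \<Longrightarrow> S \<subseteq> {1..n} \<Longrightarrow>
              i \<in> {1..n} \<Longrightarrow> R b S i = mat_vec n A (bvec b S) i"
    and conservation: "\<And>b S. (\<forall>k\<in>{1..n}. b k \<ge> 0) \<Longrightarrow> S \<subseteq> {1..n} \<Longrightarrow>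
              (\<Sum>i=1..card S. R b S i) = second_price b S"
  shows "\<forall>i\<in>{1..n}. \<forall>j\<in>{1..n}. A i j =
           (if j = 1 then 0
            else if j = 2 then (if i \<le> 2 then 1/2 else 0)
            else if i < j then - 1 / (real j * (real j - 1))
            else if i = j then 1 / real j
            else 0)"
proof (intro ballI)
  fix i j assume i: "i \<in> {1..n}" and j: "j \<in> {1..n}"
  note M = main[OF symmetry linearity conservation]
  have G: "(\<Sum>l=1..k. A i l) = (if i \<le> k then (if 2 \<le> k then 1 / real k else 0) else 0)"
    if "1 \<le> k" "k \<le> n" for k
    by (rule M) (use that i in simp_all)
  show "A i j = (if j = 1 then 0
            else if j = 2 then (if i \<le> 2 then 1/2 else 0)
            else if i < j then - 1 / (real j * (real j - 1))
            else if i = j then 1 / real j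
            else 0)"
  proof (cases "j = 1")
    case True
    then show ?thesis using G[of 1] j by simp
  next
    case False
    hence j2: "2 \<le> j" using j by auto
    have "{1..j} = insert j {1..j-1}" using j2 by auto
    moreover have "j \<notin> {1..j-1}" by auto
    ultimately have "(\<Sum>l=1..j. A i l) = A i j + (\<Sum>l=1..j-1. A i l)"
      by (metis sum.insert[OF finite_atLeastAtMost])
    hence e: "A i j = (\<Sum>l=1..j. A i l) - (\<Sum>l=1..j-1. A i l)" by simp
    have g1: "(\<Sum>l=1..j. A i l) = (if i \<le> j then 1 / real j else 0)"
      using G[of j] j j2 by simp
    have g2: "(\<Sum>l=1..j-1. A i l) = (if i \<le> j - 1 then (if 3 \<le> j then 1 / (real j - 1) else 0) else 0)"
      using G[of "j-1"] j j2 by (auto simp: of_nat_diff)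
    have jr: "real j \<ge> 2" using j2 by simp
    show ?thesis
    proof (cases "j = 2")
      case True thus ?thesis using e g1 g2 by (cases "i \<le> 2") simp_all
    next
      case False
      hence j3: "3 \<le> j" using j2 by simp
      consider "i < j" | "i = j" | "i > j" by linarith
      thus ?thesis
      proof cases
        case 1
        hence "A i j = 1 / real j - 1 / (real j - 1)" using e g1 g2 j3 by simp
        also have "... = - 1 / (real j * (real j - 1))" using jr by (simp add: field_simps)
        finally show ?thesis using 1 j3 by simp
      next
        case 2 thus ?thesis using e g1 g2 j3 by simp
      next
        case 3 thus ?thesis using e g1 g2 j3 by simp
      qed
    qed
  qed
qed

end
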